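(* Let $G=(V,E)$ be a finite simple connected graph and let $\lambda\in(0,1)$. Then $$\sum_{u\in V} t^{e}_{\lambda}(u)\;=\;\sum_{\substack{(k,l)\in V\times V\\ k\neq l}} d(k,l)\,\lambda^{d(k,l)}\;=\;\sum_{u\in V} c^{e}_{\lambda}(u),$$ where the middle sum runs over ordered pairs of distinct vertices.
   Context: $d(u,v)$ denotes the distance between vertices $u,v$ in $G$, and $[u]$ denotes the set of neighbours of $u$. For a vertex $u$, $t^{e}_{\lambda}(u)=\sum_{v\in V\setminus\{u\}} d(u,v)\lambda^{d(u,v)}$. For vertices $k,l$, $s^{kl}$ is the number of shortest $k$–$l$ paths, and for an edge $uv$, $s^{kl}_{uv}$ is the number of shortest $k$–$l$ paths that pass through the edge $uv$. The exponential edge betweenness of an edge $uv$ is $b^{e}_{\lambda}(uv)=\sum_{\{k,l\}} \frac{s^{kl}_{uv}}{s^{kl}}\lambda^{d(k,l)}$, the sum running over all unordered pairs $\{k,l\}$ of distinct vertices of $V$. The exponential betweenness centrality of a vertex $u$ is $c^{e}_{\lambda}(u)=\sum_{v\in[u]} b^{e}_{\lambda}(uv)$. *)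

theory Defs
  imports Complex_Main
begin

text \<open>Walks are nonempty vertex lists with consecutive
  vertices adjacent; a walk with n+1 vertices has length n.\<close>

definition simple_graph :: "'a set \<Rightarrow> ('a \<Rightarrow> 'a \<Rightarrow> bool) \<Rightarrow> bool" where
  "simple_graph V E \<longleftrightarrow> finite V \<and> (\<forall>u v. E u v \<longrightarrow> u \<in> V \<and> v \<in> V)
     \<and> (\<forall>u v. E u v \<longrightarrow> E v u) \<and> (\<forall>u. \<not> E u u)"

definition walk :: "'a set \<Rightarrow> ('a \<Rightarrow> 'a \<Rightarrow> bool) \<Rightarrow> 'a list \<Rightarrow> bool" where
  "walk V E xs \<longleftrightarrow> xs \<noteq> [] \<and> set xs \<subseteq> V \<and>
     (\<forall>i. i + 1 < length xs \<longrightarrow> E (xs ! i) (xs ! (i + 1)))"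

definition walks_between :: "'a set \<Rightarrow> ('a \<Rightarrow> 'a \<Rightarrow> bool) \<Rightarrow> 'a \<Rightarrow> 'a \<Rightarrow> 'a list set" where
  "walks_between V E u v = {xs. walk V E xs \<and> hd xs = u \<and> last xs = v}"

definition connected_graph :: "'a set \<Rightarrow> ('a \<Rightarrow> 'a \<Rightarrow> bool) \<Rightarrow> bool" where
  "connected_graph V E \<longleftrightarrow> (\<forall>u\<in>V. \<forall>v\<in>V. walks_between V E u v \<noteq> {})"

definition dist_g :: "'a set \<Rightarrow> ('a \<Rightarrow> 'a \<Rightarrow> bool) \<Rightarrow> 'a \<Rightarrow> 'a \<Rightarrow> nat" where
  "dist_g V E u v = (LEAST n. \<exists>xs \<in> walks_between V E u v. length xs = n + 1)"

definition neighbours :: "'a set \<Rightarrow> ('a \<Rightarrow> 'a \<Rightarrow> bool) \<Rightarrow> 'a \<Rightarrow> 'a set" where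
  "neighbours V E u = {v \<in> V. E u v}"

definition shortest_paths :: "'a set \<Rightarrow> ('a \<Rightarrow> 'a \<Rightarrow> bool) \<Rightarrow> 'a \<Rightarrow> 'a \<Rightarrow> 'a list set" where
  "shortest_paths V E k l = {xs \<in> walks_between V E k l. length xs = dist_g V E k l + 1}"

definition uses_edge :: "'a list \<Rightarrow> 'a \<Rightarrow> 'a \<Rightarrow> bool" where
  "uses_edge xs u v \<longleftrightarrow> (\<exists>i. i + 1 < length xs \<and>
     ((xs ! i = u \<and> xs ! (i + 1) = v) \<or> (xs ! i = v \<and> xs ! (i + 1) = u)))"

definition num_sp :: "'a set \<Rightarrow> ('a \<Rightarrow> 'a \<Rightarrow> bool) \<Rightarrow> 'a \<Rightarrow> 'a \<Rightarrow> nat" where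
  "num_sp V E k l = card (shortest_paths V E k l)"

definition num_sp_edge :: "'a set \<Rightarrow> ('a \<Rightarrow> 'a \<Rightarrow> bool) \<Rightarrow> 'a \<Rightarrow> 'a \<Rightarrow> 'a \<Rightarrow> 'a \<Rightarrow> nat" where
  "num_sp_edge V E k l u v = card {xs \<in> shortest_paths V E k l. uses_edge xs u v}"

definition exp_trans :: "'a set \<Rightarrow> ('a \<Rightarrow> 'a \<Rightarrow> bool) \<Rightarrow> real \<Rightarrow> 'a \<Rightarrow> real" where
  "exp_trans V E lam u = (\<Sum>v\<in>V - {u}. real (dist_g V E u v) * lam ^ dist_g V E u v)"

definition upairs :: "'a set \<Rightarrow> 'a set set" where
  "upairs V = {{k, l} | k l. k \<in> V \<and> l \<in> V \<and> k \<noteq> l}"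

text \<open>The summand of the exponential edge betweenness for an ordered pair (k,l);
  it is symmetric in k,l, so evaluating it at any ordering of the unordered pair is well defined.\<close>
definition eb_term :: "'a set \<Rightarrow> ('a \<Rightarrow> 'a \<Rightarrow> bool) \<Rightarrow> real \<Rightarrow> 'a \<Rightarrow> 'a \<Rightarrow> 'a \<Rightarrow> 'a \<Rightarrow> real" where
  "eb_term V E lam u v k l =
     real (num_sp_edge V E k l u v) / real (num_sp V E k l) * lam ^ dist_g V E k l"

definition exp_edge_betw :: "'a set \<Rightarrow> ('a \<Rightarrow> 'a \<Rightarrow> bool) \<Rightarrow> real \<Rightarrow> 'a \<Rightarrow> 'a \<Rightarrow> real" where
  "exp_edge_betw V E lam u v =
     (\<Sum>P\<in>upairs V. (case (SOME kl. P = {fst kl, snd kl} \<and> fst kl \<noteq> snd kl) of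
        (k, l) \<Rightarrow> eb_term V E lam u v k l))"

definition exp_betw :: "'a set \<Rightarrow> ('a \<Rightarrow> 'a \<Rightarrow> bool) \<Rightarrow> real \<Rightarrow> 'a \<Rightarrow> real" where
  "exp_betw V E lam u = (\<Sum>v\<in>neighbours V E u. exp_edge_betw V E lam u v)"

end

theory Submission imports Defs begin


lemma succ_nth: "(\<forall>i. i + 1 < length xs \<longrightarrow> P (xs ! i) (xs ! (i + 1))) \<longleftrightarrow> successively P xs"
proof (induction P xs rule: successively.induct)
  case (3 P x y xs)
  have "(\<forall>i. i + 1 < length (x # y # xs) \<longrightarrow> P ((x # y # xs) ! i) ((x # y # xs) ! (i + 1)))
     \<longleftrightarrow> P x y \<and> (\<forall>i. i + 1 < length (y # xs) \<longrightarrow> P ((y # xs) ! i) ((y # xs) ! (i + 1)))"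
    (is "?L \<longleftrightarrow> ?R")
  proof
    assume L: ?L
    show ?R
    proof
      show "P x y" using L[rule_format, of 0] by simp
      show "\<forall>i. i + 1 < length (y # xs) \<longrightarrow> P ((y # xs) ! i) ((y # xs) ! (i + 1))"
      proof (intro allI impI)
        fix i assume "i + 1 < length (y # xs)"
        then show "P ((y # xs) ! i) ((y # xs) ! (i + 1))" using L[rule_format, of "Suc i"] by simp
      qed
    qed
  next
    assume R: ?R
    show ?L
    proof (intro allI impI)
      fix i assume "i + 1 < length (x # y # xs)"
      then show "P ((x # y # xs) ! i) ((x # y # xs) ! (i + 1))"
        using R by (cases i) auto
    qed
  qed
  then show ?case using 3 by simp
qed auto

lemma walk_alt: "walk V E xs \<longleftrightarrow> xs \<noteq> [] \<and> set xs \<subseteq> V \<and> successively E xs"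
  unfolding walk_def using succ_nth[of xs E] by blast



lemma rev_walk:
  assumes "simple_graph V E" "xs \<in> walks_between V E u v"
  shows "rev xs \<in> walks_between V E v u"
proof -
  have "successively E xs" "xs \<noteq> []" "set xs \<subseteq> V" "hd xs = u" "last xs = v"
    using assms(2) by (auto simp: walks_between_def walk_alt)
  moreover have "successively (\<lambda>x y. E y x) xs"
    using successively_mono[OF \<open>successively E xs\<close>] assms(1) by (auto simp: simple_graph_def)
  ultimately show ?thesis by (auto simp: walks_between_def walk_alt hd_rev last_rev)
qed

lemma dist_sym:
  assumes "simple_graph V E"
  shows "dist_g V E u v = dist_g V E v u"
proof -
  have "(\<exists>xs \<in> walks_between V E u v. length xs = n + 1) \<longleftrightarrow> (\<exists>xs \<in> walks_between V E v u. length xs = n + 1)" for n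
    using rev_walk[OF assms] by (metis length_rev)
  then show ?thesis unfolding dist_g_def by simp
qed

lemma dist_le:
  assumes "xs \<in> walks_between V E u v"
  shows "dist_g V E u v \<le> length xs - 1"
proof -
  have "xs \<noteq> []" using assms by (auto simp: walks_between_def walk_def)
  then have "\<exists>ys \<in> walks_between V E u v. length ys = (length xs - 1) + 1" using assms by auto
  then show ?thesis unfolding dist_g_def by (rule Least_le)
qed

lemma sp_exists:
  assumes "connected_graph V E" "u \<in> V" "v \<in> V"
  shows "shortest_paths V E u v \<noteq> {}"
proof -
  obtain xs where xs: "xs \<in> walks_between V E u v" using assms by (auto simp: connected_graph_def)
  have "xs \<noteq> []" using xs by (auto simp: walks_between_def walk_def)
  then have "\<exists>n. \<exists>ys \<in> walks_between V E u v. length ys = n + 1" using xs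
    by (metis Suc_eq_plus1 Suc_pred length_greater_0_conv)
  from LeastI_ex[OF this] show ?thesis
    unfolding shortest_paths_def dist_g_def by auto
qed

lemma sp_finite:
  assumes "simple_graph V E"
  shows "finite (shortest_paths V E u v)"
proof -
  have "shortest_paths V E u v \<subseteq> {xs. set xs \<subseteq> V \<and> length xs = dist_g V E u v + 1}"
    by (auto simp: shortest_paths_def walks_between_def walk_def)
  moreover have "finite {xs. set xs \<subseteq> V \<and> length xs = dist_g V E u v + 1}"
    using assms by (intro finite_lists_length_eq) (auto simp: simple_graph_def)
  ultimately show ?thesis by (rule finite_subset)
qed

lemma sp_distinct:
  assumes "xs \<in> shortest_paths V E k l"
  shows "distinct xs"
proof (rule ccontr)
  assume "\<not> distinct xs"
  then obtain as bs cs y where xs: "xs = as @ [y] @ bs @ [y] @ cs"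
    using not_distinct_decomp by blast
  have W: "xs \<in> walks_between V E k l" and L: "length xs = dist_g V E k l + 1"
    using assms by (auto simp: shortest_paths_def)
  let ?ys = "as @ [y] @ cs"
  have "?ys \<in> walks_between V E k l"
    using W unfolding xs
    by (cases as) (auto simp: walks_between_def walk_alt successively_append_iff successively_Cons hd_append)
  from dist_le[OF this] have "dist_g V E k l \<le> length ?ys - 1" .
  moreover have "length ?ys < length xs" using xs by simp
  ultimately show False using L by simp
qed

lemma uses_card:
  assumes "distinct xs"
  shows "card {(u, v). uses_edge xs u v} = 2 * (length xs - 1)"
proof -
  let ?n = "length xs - 1"
  let ?A = "(\<lambda>i. (xs ! i, xs ! (i + 1))) ` {..<?n}"
  let ?B = "(\<lambda>i. (xs ! (i + 1), xs ! i)) ` {..<?n}"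
  have eq: "{(u, v). uses_edge xs u v} = ?A \<union> ?B"
    unfolding uses_edge_def by (auto simp: image_iff; force simp: less_diff_conv)
  have injA: "inj_on (\<lambda>i. (xs ! i, xs ! (i + 1))) {..<?n}"
    using assms by (auto simp: inj_on_def nth_eq_iff_index_eq)
  have injB: "inj_on (\<lambda>i. (xs ! (i + 1), xs ! i)) {..<?n}"
    using assms by (auto simp: inj_on_def nth_eq_iff_index_eq)
  have disj: "?A \<inter> ?B = {}"
  proof (rule ccontr)
    assume "?A \<inter> ?B \<noteq> {}"
    then obtain i j where ij: "i < ?n" "j < ?n" "xs ! i = xs ! (j + 1)" "xs ! (i + 1) = xs ! j"
      by auto
    then have "i = j + 1" "i + 1 = j" using assms by (auto simp: nth_eq_iff_index_eq)
    then show False by simp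
  qed
  have "card (?A \<union> ?B) = card ?A + card ?B"
    using disj by (intro card_Un_disjoint) auto
  also have "\<dots> = 2 * ?n" using card_image[OF injA] card_image[OF injB] by simp
  finally show ?thesis using eq by simp
qed



lemma uses_edge_E:
  assumes "simple_graph V E" "walk V E xs" "uses_edge xs u v"
  shows "u \<in> V \<and> v \<in> V \<and> E u v"
proof -
  obtain i where i: "i + 1 < length xs"
    "(xs ! i = u \<and> xs ! (i + 1) = v) \<or> (xs ! i = v \<and> xs ! (i + 1) = u)"
    using assms(3) unfolding uses_edge_def by blast
  have "E (xs ! i) (xs ! (i + 1))" using assms(2) i(1) by (auto simp: walk_def)
  moreover have "xs ! i \<in> V" "xs ! (i + 1) \<in> V" using assms(2) i(1) by (auto simp: walk_def)
  ultimately show ?thesis using i(2) assms(1) by (auto simp: simple_graph_def)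
qed

lemma card_filter_sum:
  "finite A \<Longrightarrow> card {x \<in> A. P x} = (\<Sum>x\<in>A. if P x then 1 else 0)"
  by (simp add: sum.If_cases Int_def)

lemma key_nat:
  assumes G: "simple_graph V E"
  shows "(\<Sum>p\<in>Sigma V (neighbours V E). num_sp_edge V E k l (fst p) (snd p))
       = 2 * dist_g V E k l * num_sp V E k l"
proof -
  let ?D = "Sigma V (neighbours V E)"
  let ?S = "shortest_paths V E k l"
  have fD: "finite ?D" using G
    by (intro finite_SigmaI) (auto simp: simple_graph_def neighbours_def)
  have fS: "finite ?S" using sp_finite[OF G] .
  have "(\<Sum>p\<in>?D. num_sp_edge V E k l (fst p) (snd p))
      = (\<Sum>p\<in>?D. \<Sum>xs\<in>?S. if uses_edge xs (fst p) (snd p) then 1 else 0)"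
    unfolding num_sp_edge_def using fS by (simp add: card_filter_sum)
  also have "\<dots> = (\<Sum>xs\<in>?S. \<Sum>p\<in>?D. if uses_edge xs (fst p) (snd p) then 1 else 0)"
    by (rule sum.swap)
  also have "\<dots> = (\<Sum>xs\<in>?S. 2 * dist_g V E k l)"
  proof (rule sum.cong[OF refl])
    fix xs assume xs: "xs \<in> ?S"
    have w: "walk V E xs" and len: "length xs = dist_g V E k l + 1"
      using xs by (auto simp: shortest_paths_def walks_between_def)
    have "{p \<in> ?D. uses_edge xs (fst p) (snd p)} = {(u, v). uses_edge xs u v}"
      using uses_edge_E[OF G w] by (auto simp: neighbours_def)
    then have "(\<Sum>p\<in>?D. if uses_edge xs (fst p) (snd p) then 1 else 0) = card {(u, v). uses_edge xs u v}"
      using card_filter_sum[OF fD, of "\<lambda>p. uses_edge xs (fst p) (snd p)"] by simp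
    also have "\<dots> = 2 * dist_g V E k l"
      using uses_card[OF sp_distinct[OF xs]] len by simp
    finally show "(\<Sum>p\<in>?D. if uses_edge xs (fst p) (snd p) then 1 else 0) = 2 * dist_g V E k l" .
  qed
  also have "\<dots> = 2 * dist_g V E k l * num_sp V E k l"
    by (simp add: num_sp_def)
  finally show ?thesis .
qed

lemma key_real:
  assumes G: "simple_graph V E" and C: "connected_graph V E" and "k \<in> V" "l \<in> V"
  shows "(\<Sum>p\<in>Sigma V (neighbours V E). eb_term V E lam (fst p) (snd p) k l)
       = 2 * (real (dist_g V E k l) * lam ^ dist_g V E k l)"
proof -
  let ?D = "Sigma V (neighbours V E)"
  have pos: "real (num_sp V E k l) > 0"
    using sp_exists[OF C assms(3,4)] sp_finite[OF G] by (simp add: num_sp_def card_gt_0_iff)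
  have "(\<Sum>p\<in>?D. eb_term V E lam (fst p) (snd p) k l)
      = (\<Sum>p\<in>?D. real (num_sp_edge V E k l (fst p) (snd p))) / real (num_sp V E k l) * lam ^ dist_g V E k l"
    unfolding eb_term_def by (simp add: sum_divide_distrib sum_distrib_right)
  also have "(\<Sum>p\<in>?D. real (num_sp_edge V E k l (fst p) (snd p))) = real (2 * dist_g V E k l * num_sp V E k l)"
    using key_nat[OF G, of k l] by (metis of_nat_sum)
  finally show ?thesis using pos by simp
qed

theorem theorem1:
  fixes V :: "'a set" and E :: "'a \<Rightarrow> 'a \<Rightarrow> bool" and lam :: real
  assumes "simple_graph V E" and "connected_graph V E"
    and "0 < lam" and "lam < 1"
  shows "(\<Sum>u\<in>V. exp_trans V E lam u)
           = (\<Sum>(k, l)\<in>{(k, l) \<in> V \<times> V. k \<noteq> l}. real (dist_g V E k l) * lam ^ dist_g V E k l)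
       \<and> (\<Sum>(k, l)\<in>{(k, l) \<in> V \<times> V. k \<noteq> l}. real (dist_g V E k l) * lam ^ dist_g V E k l)
           = (\<Sum>u\<in>V. exp_betw V E lam u)"
proof
  note G = assms(1) and C = assms(2)
  define F where "F k l = real (dist_g V E k l) * lam ^ dist_g V E k l" for k l
  let ?S = "{(k, l) \<in> V \<times> V. k \<noteq> l}"
  have fV: "finite V" using G by (simp add: simple_graph_def)
  have Seq: "?S = Sigma V (\<lambda>u. V - {u})" by auto
  have fS: "finite ?S" by (rule finite_subset[of _ "V \<times> V"]) (auto simp: fV)
  show "(\<Sum>u\<in>V. exp_trans V E lam u) = (\<Sum>(k, l)\<in>?S. real (dist_g V E k l) * lam ^ dist_g V E k l)"
    unfolding exp_trans_def Seq using fV by (subst sum.Sigma) auto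
  define rep where "rep P = (SOME kl. P = {fst kl, snd kl} \<and> fst kl \<noteq> snd kl)" for P :: "'a set"
  have rep: "P = {fst (rep P), snd (rep P)} \<and> fst (rep P) \<noteq> snd (rep P) \<and> fst (rep P) \<in> V \<and> snd (rep P) \<in> V"
    if Pin: "P \<in> upairs V" for P
  proof -
    obtain a b where ab: "a \<in> V" "b \<in> V" "a \<noteq> b" "P = {a, b}" using Pin unfolding upairs_def by blast
    have "\<exists>kl. P = {fst kl, snd kl} \<and> fst kl \<noteq> snd kl" using ab by (intro exI[of _ "(a, b)"]) auto
    then have "P = {fst (rep P), snd (rep P)} \<and> fst (rep P) \<noteq> snd (rep P)"
      unfolding rep_def by (rule someI_ex)
    then show ?thesis using ab by (auto simp: doubleton_eq_iff)
  qed
  have Fsym: "F k l = F l k" for k l using dist_sym[OF G] by (simp add: F_def)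
  let ?D = "Sigma V (neighbours V E)"
  have fD: "finite ?D" using G
    by (intro finite_SigmaI) (auto simp: simple_graph_def neighbours_def)
  have fU: "finite (upairs V)"
  proof -
    have "upairs V \<subseteq> Pow V" by (auto simp: upairs_def)
    then show ?thesis using fV by (meson finite_Pow_iff finite_subset)
  qed
  have "(\<Sum>u\<in>V. exp_betw V E lam u) = (\<Sum>p\<in>?D. exp_edge_betw V E lam (fst p) (snd p))"
    unfolding exp_betw_def using fV G
    by (subst sum.Sigma) (auto simp: simple_graph_def neighbours_def split_def)
  also have "\<dots> = (\<Sum>p\<in>?D. \<Sum>P\<in>upairs V. eb_term V E lam (fst p) (snd p) (fst (rep P)) (snd (rep P)))"
    unfolding exp_edge_betw_def rep_def by (simp add: split_def)
  also have "\<dots> = (\<Sum>P\<in>upairs V. \<Sum>p\<in>?D. eb_term V E lam (fst p) (snd p) (fst (rep P)) (snd (rep P)))"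
    by (rule sum.swap)
  also have "\<dots> = (\<Sum>P\<in>upairs V. 2 * F (fst (rep P)) (snd (rep P)))"
    by (rule sum.cong[OF refl]) (use rep key_real[OF G C] in \<open>auto simp: F_def\<close>)
  finally have R: "(\<Sum>u\<in>V. exp_betw V E lam u) = (\<Sum>P\<in>upairs V. 2 * F (fst (rep P)) (snd (rep P)))" .
  have img: "(\<lambda>p. {fst p, snd p}) ` ?S = upairs V"
    unfolding upairs_def by (auto simp: image_iff) (metis fst_conv snd_conv, blast)
  have "(\<Sum>p\<in>?S. F (fst p) (snd p))
      = (\<Sum>P\<in>(\<lambda>p. {fst p, snd p}) ` ?S. \<Sum>p\<in>{x \<in> ?S. {fst x, snd x} = P}. F (fst p) (snd p))"
    by (rule sum.image_gen[OF fS])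
  also have "\<dots> = (\<Sum>P\<in>upairs V. 2 * F (fst (rep P)) (snd (rep P)))"
    unfolding img
  proof (rule sum.cong[OF refl])
    fix P assume P: "P \<in> upairs V"
    obtain a b where ab: "rep P = (a, b)" by (cases "rep P")
    have r: "P = {a, b}" "a \<noteq> b" "a \<in> V" "b \<in> V" using rep[OF P] ab by auto
    have "{x \<in> ?S. {fst x, snd x} = P} = {(a, b), (b, a)}"
      using r by (auto simp: doubleton_eq_iff)
    then have "(\<Sum>p\<in>{x \<in> ?S. {fst x, snd x} = P}. F (fst p) (snd p)) = F a b + F b a"
      using r by simp
    then show "(\<Sum>p\<in>{x \<in> ?S. {fst x, snd x} = P}. F (fst p) (snd p)) = 2 * F (fst (rep P)) (snd (rep P))"
      using Fsym[of a b] ab by simp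
  qed
  finally show "(\<Sum>(k, l)\<in>?S. real (dist_g V E k l) * lam ^ dist_g V E k l) = (\<Sum>u\<in>V. exp_betw V E lam u)"
    using R by (simp add: F_def split_def)
qed

end
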